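(* For every $t>0$ and all finite sets $X,Y,Z\subset\mathbb{R}$, $d^t_{Mag}(X,Y)+d^t_{Mag}(Y,Z)\ge d^t_{Mag}(X,Z)$.
   Context: For a finite set $A\subset\mathbb{R}$ and $t>0$, the matrix $\zeta_{tA}(x,y)=\exp(-t|x-y|)$ ($x,y\in A$) is invertible and $\mathrm{Mag}(tA)=\mathbb{1}^\top\zeta_{tA}^{-1}\mathbb{1}$, with $\mathrm{Mag}(t\emptyset)=0$. The magnitude distance is $d^t_{Mag}(X,Y)=2\,\mathrm{Mag}(t(X\cup Y))-\mathrm{Mag}(tX)-\mathrm{Mag}(tY)$. *)

theory Defs
  imports "Jordan_Normal_Form.Matrix"
begin

(* The similarity matrix zeta_{tA}(x,y) = exp(-t|x-y|), x,y in A, with the points of A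
   enumerated in increasing order (the value of the magnitude does not depend on the order). *)
definition zeta_mat :: "real \<Rightarrow> real set \<Rightarrow> real mat" where
  "zeta_mat t A = (let xs = sorted_list_of_set A in
     mat (card A) (card A) (\<lambda>(i, j). exp (- t * \<bar>xs ! i - xs ! j\<bar>)))"

definition mat_inv :: "real mat \<Rightarrow> real mat" where
  "mat_inv M = (SOME B. inverts_mat M B \<and> inverts_mat B M)"

definition Mag :: "real \<Rightarrow> real set \<Rightarrow> real" where
  "Mag t A = (let n = card A in
     vec n (\<lambda>_. 1) \<bullet> (mat_inv (zeta_mat t A) *\<^sub>v vec n (\<lambda>_. 1)))"

definition d_Mag :: "real \<Rightarrow> real set \<Rightarrow> real set \<Rightarrow> real" where
  "d_Mag t X Y = 2 * Mag t (X \<union> Y) - Mag t X - Mag t Y"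

end

theory Submission
  imports Defs "Jordan_Normal_Form.Determinant"
begin

lemma mat_inv_eq:
  fixes Z B :: "real mat"
  assumes Z: "Z \<in> carrier_mat n n" and B: "B \<in> carrier_mat n n" and ZB: "Z * B = 1\<^sub>m n"
  shows "mat_inv Z = B"
proof -
  have BZ: "B * Z = 1\<^sub>m n" using mat_mult_left_right_inverse[OF Z B ZB] .
  have ex: "inverts_mat Z B \<and> inverts_mat B Z"
    using ZB BZ Z B by (auto simp: inverts_mat_def)
  define B' where "B' = (SOME B. inverts_mat Z B \<and> inverts_mat B Z)"
  have h: "inverts_mat Z B' \<and> inverts_mat B' Z"
    unfolding B'_def by (rule someI, rule ex)
  hence 1: "Z * B' = 1\<^sub>m n" and 2: "B' * Z = 1\<^sub>m (dim_row B')"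
    using Z by (auto simp: inverts_mat_def)
  have c: "dim_col B' = n" using arg_cong[OF 1, of dim_col] by simp
  have r: "dim_row B' = n" using arg_cong[OF 2, of dim_col] Z by simp
  have B'c: "B' \<in> carrier_mat n n" using c r by auto
  have "B' = B' * (Z * B)" using ZB B'c by simp
  also have "\<dots> = (B' * Z) * B" using B'c Z B by simp
  also have "\<dots> = B" using 2 r B by simp
  finally show ?thesis unfolding mat_inv_def B'_def[symmetric] by simp
qed



definition ee :: "real \<Rightarrow> (nat \<Rightarrow> real) \<Rightarrow> nat \<Rightarrow> real" where
  "ee t x k = exp (- t * \<bar>x k - x (Suc k)\<bar>)"
definition cc :: "real \<Rightarrow> (nat \<Rightarrow> real) \<Rightarrow> nat \<Rightarrow> real" where
  "cc t x k = 1 / (1 - (ee t x k)^2)"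
definition dg :: "real \<Rightarrow> (nat \<Rightarrow> real) \<Rightarrow> nat \<Rightarrow> nat \<Rightarrow> real" where
  "dg t x n j = (if 0 < j then cc t x (j - 1) else 1) + (if Suc j < n then (ee t x j)^2 * cc t x j else 0)"
definition od :: "real \<Rightarrow> (nat \<Rightarrow> real) \<Rightarrow> nat \<Rightarrow> real" where
  "od t x k = - ee t x k * cc t x k"
definition Bm :: "real \<Rightarrow> (nat \<Rightarrow> real) \<Rightarrow> nat \<Rightarrow> real mat" where
  "Bm t x n = mat n n (\<lambda>(i,j). if i = j then dg t x n j else if i = Suc j then od t x j
      else if j = Suc i then od t x i else 0)"
definition Zm :: "real \<Rightarrow> (nat \<Rightarrow> real) \<Rightarrow> nat \<Rightarrow> real mat" where
  "Zm t x n = mat n n (\<lambda>(i,j). exp (- t * \<bar>x i - x j\<bar>))"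

lemma three_sum:
  fixes f a b c :: "nat \<Rightarrow> real"
  assumes "j < n"
  shows "(\<Sum>k\<in>{0..<n}. f k * (if k = j then a j else if k = Suc j then b j else if j = Suc k then c k else 0))
     = f j * a j + (if Suc j < n then f (Suc j) * b j else 0) + (if 0 < j then f (j - 1) * c (j - 1) else 0)"
proof -
  have e: "\<And>k. f k * (if k = j then a j else if k = Suc j then b j else if j = Suc k then c k else 0)
     = (if k = j then f j * a j else 0) + (if k = Suc j then f (Suc j) * b j else 0)
       + (if k = j - 1 \<and> 0 < j then f (j - 1) * c (j - 1) else 0)"
    by auto
  show ?thesis unfolding e sum.distrib using assms
    by (simp add: sum.delta' sum.If_cases) 
qed



lemma ZB_one:
  fixes t :: real and x :: "nat \<Rightarrow> real"
  assumes t: "t > 0" and mono: "\<And>i j. i < j \<Longrightarrow> j < n \<Longrightarrow> x i < x j"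
  shows "Zm t x n * Bm t x n = 1\<^sub>m n"
proof -
  define z where "z i j = exp (- t * \<bar>x i - x j\<bar>)" for i j
  have zsym: "z i j = z j i" for i j unfolding z_def by (simp add: abs_minus_commute)
  have zii: "z i i = 1" for i unfolding z_def by simp
  have zmul: "z i k = z i j * z j k" if "i \<le> j" "j \<le> k" "k < n" for i j k
  proof -
    have "x i \<le> x j" using that mono[of i j] by (cases "i = j") auto
    moreover have "x j \<le> x k" using that mono[of j k] by (cases "j = k") auto
    ultimately have "\<bar>x i - x k\<bar> = \<bar>x i - x j\<bar> + \<bar>x j - x k\<bar>" by auto
    thus ?thesis unfolding z_def by (simp add: distrib_left exp_add[symmetric])
  qed
  have ez: "ee t x k = z k (Suc k)" for k unfolding ee_def z_def by simp
  have epos: "0 < ee t x k" for k unfolding ee_def by simp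
  have elt1: "ee t x k < 1" if "Suc k < n" for k
  proof -
    have "x k < x (Suc k)" using mono[of k "Suc k"] that by simp
    hence "- t * \<bar>x k - x (Suc k)\<bar> < 0" using t by (simp add: mult_pos_pos)
    thus ?thesis unfolding ee_def by simp
  qed
  have cinv: "cc t x k * (1 - (ee t x k)^2) = 1" if "Suc k < n" for k
  proof -
    have "(ee t x k)^2 < 1" using elt1[OF that] epos[of k]
      by (simp add: power_less_one_iff abs_less_iff power2_less_1_iff)  
    thus ?thesis unfolding cc_def by simp
  qed
  show ?thesis
  proof (rule eq_matI)
    fix i j assume i: "i < dim_row (1\<^sub>m n)" and j: "j < dim_col (1\<^sub>m n)"
    hence i: "i < n" and j: "j < n" by auto
    have "(Zm t x n * Bm t x n) $$ (i, j) = (\<Sum>k\<in>{0..<n}. z i k * (if k = j then dg t x n j else if k = Suc j then od t x j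
      else if j = Suc k then od t x k else 0))"
      using i j by (simp add: Zm_def Bm_def scalar_prod_def z_def cong: if_cong)
    also have "\<dots> = z i j * dg t x n j + (if Suc j < n then z i (Suc j) * od t x j else 0)
        + (if 0 < j then z i (j - 1) * od t x (j - 1) else 0)"
      by (rule three_sum[OF j])
    also have "\<dots> = (if i = j then 1 else 0)"
    proof (cases "i = j")
      case True
      have a: "z j (Suc j) = ee t x j" using ez by simp
      have b: "0 < j \<Longrightarrow> z j (j - 1) = ee t x (j - 1)" using ez[of "j - 1"] zsym[of j "j - 1"] by simp
      have c: "0 < j \<Longrightarrow> cc t x (j - 1) * (1 - (ee t x (j - 1))^2) = 1" using cinv[of "j - 1"] j by simp
      have d: "Suc j < n \<Longrightarrow> cc t x j * (1 - (ee t x j)^2) = 1" using cinv by simp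
      show ?thesis using True a b c d zii[of j] unfolding dg_def od_def
        by (auto simp: algebra_simps power2_eq_square)
    next
      case False
      show ?thesis
      proof (cases "i < j")
        case True
        have j0: "0 < j" using True by simp
        have a: "z i j = z i (j - 1) * ee t x (j - 1)"
          using zmul[of i "j - 1" j] True j ez[of "j - 1"] by simp
        have b: "Suc j < n \<Longrightarrow> z i (Suc j) = z i j * ee t x j"
          using zmul[of i j "Suc j"] True ez[of j] by simp
        show ?thesis using False j0 a b unfolding dg_def od_def
          by (auto simp: algebra_simps power2_eq_square)
      next
        case F2: False
        hence ij: "Suc j \<le> i" using False by simp
        have a: "z i j = ee t x j * z i (Suc j)"
          using zmul[of j "Suc j" i] ij i ez[of j] zsym[of i j] zsym[of i "Suc j"] by simp
        have b: "0 < j \<Longrightarrow> z i (j - 1) = ee t x (j - 1) * z i j"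
          using zmul[of "j - 1" j i] ij i ez[of "j - 1"] zsym[of i j] zsym[of i "j - 1"] by simp
        have c: "0 < j \<Longrightarrow> cc t x (j - 1) * (1 - (ee t x (j - 1))^2) = 1" using cinv[of "j - 1"] j by simp
        have d: "cc t x j * (1 - (ee t x j)^2) = 1" using cinv ij i by simp
        define w where "w = z i (Suc j)"
        define e where "e = ee t x j"
        define C where "C = cc t x j"
        have d': "C - C * e^2 = 1" using d unfolding C_def e_def by (simp add: algebra_simps)
        show ?thesis
        proof (cases "0 < j")
          case True
          define e' where "e' = ee t x (j - 1)"
          define C' where "C' = cc t x (j - 1)"
          have c': "C' - C' * e'^2 = 1" using c[OF True] unfolding C'_def e'_def by (simp add: algebra_simps)
          have "e * w * (C' - C' * e'^2) = e * w * (C - C * e^2)" using c' d' by simp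
          hence "z i j * dg t x n j + (if Suc j < n then z i (Suc j) * od t x j else 0)
            + (if 0 < j then z i (j - 1) * od t x (j - 1) else 0) = 0"
            using True i ij a b[OF True] unfolding dg_def od_def w_def[symmetric] e_def[symmetric]
              C_def[symmetric] e'_def[symmetric] C'_def[symmetric]
            by (simp add: algebra_simps power2_eq_square power3_eq_cube)
          thus ?thesis using False by simp
        next
          case F3: False
          have "e * w * 1 = e * w * (C - C * e^2)" using d' by simp
          hence "z i j * dg t x n j + (if Suc j < n then z i (Suc j) * od t x j else 0)
            + (if 0 < j then z i (j - 1) * od t x (j - 1) else 0) = 0"
            using F3 i ij a unfolding dg_def od_def w_def[symmetric] e_def[symmetric]
              C_def[symmetric]
            by (simp add: algebra_simps power2_eq_square power3_eq_cube)
          thus ?thesis using False by simp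
        qed
      qed
    qed
    finally show "(Zm t x n * Bm t x n) $$ (i, j) = 1\<^sub>m n $$ (i, j)" using i j by simp
  qed (auto simp: Zm_def Bm_def)
qed



lemma aux: fixes e :: real assumes "e \<noteq> 1" "1 + e \<noteq> 0"
  shows "e^2 * (1 / (1 - e^2)) - e * (1 / (1 - e^2)) = - (e / (1 + e))"
proof -
  have "1 - e^2 = (1 - e) * (1 + e)" by (simp add: algebra_simps power2_eq_square)
  moreover have "e^2 - e = (- e) * (1 - e)" by (simp add: algebra_simps power2_eq_square)
  moreover have "1 - e \<noteq> 0" using assms by simp
  ultimately have "(e^2 - e) / (1 - e^2) = - e / (1 + e)" using assms by simp
  thus ?thesis by (simp add: diff_divide_distrib)
qed

definition hh :: "real \<Rightarrow> real" where "hh s = (1 - s) / (1 + s)"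

lemma row_sum_B:
  assumes i: "i < n" and epos: "\<And>k. 0 \<le> ee t x k" and cinv: "\<And>k. Suc k < n \<Longrightarrow> (ee t x k)^2 \<noteq> 1"
  shows "(\<Sum>j\<in>{0..<n}. Bm t x n $$ (i, j)) =
    (if 0 < i then 1 / (1 + ee t x (i - 1)) else 1) - (if Suc i < n then ee t x i / (1 + ee t x i) else 0)"
proof -
  have e: "\<And>j. j < n \<Longrightarrow> Bm t x n $$ (i, j)
     = (if j = i then dg t x n i else 0) + (if j = Suc i then od t x i else 0)
       + (if j = i - 1 \<and> 0 < i then od t x (i - 1) else 0)"
    using i by (auto simp: Bm_def)
  have "(\<Sum>j\<in>{0..<n}. Bm t x n $$ (i, j)) = (\<Sum>j\<in>{0..<n}. (if j = i then dg t x n i else 0) + (if j = Suc i then od t x i else 0)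
       + (if j = i - 1 \<and> 0 < i then od t x (i - 1) else 0))"
    by (rule sum.cong) (auto simp: e)
  also have "\<dots> = dg t x n i + (if Suc i < n then od t x i else 0) + (if 0 < i then od t x (i - 1) else 0)"
    unfolding sum.distrib using i by (simp add: sum.delta' sum.If_cases)
  also have "\<dots> = (if 0 < i then 1 / (1 + ee t x (i - 1)) else 1) - (if Suc i < n then ee t x i / (1 + ee t x i) else 0)"
  proof -
    have A: "cc t x k - ee t x k * cc t x k = 1 / (1 + ee t x k)" if "Suc k < n" for k
    proof -
      have "1 - (ee t x k)^2 \<noteq> 0" using cinv[OF that] by simp
      moreover have "1 + ee t x k \<noteq> 0" using epos[of k] by linarith
      moreover have "1 - ee t x k \<noteq> 0" using cinv[OF that] by auto
      ultimately show ?thesis unfolding cc_def by (simp add: field_simps power2_eq_square)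
    qed
    have B: "(ee t x k)^2 * cc t x k - ee t x k * cc t x k = - (ee t x k / (1 + ee t x k))" if "Suc k < n" for k
    proof -
      have "1 + ee t x k \<noteq> 0" using epos[of k] by linarith
      moreover have "ee t x k \<noteq> 1" using cinv[OF that] by auto
      ultimately show ?thesis unfolding cc_def by (intro aux)
    qed
    show ?thesis using A[of "i - 1"] B[of i] i unfolding dg_def od_def by auto
  qed
  finally show ?thesis .
qed

lemma total_sum:
  fixes e :: "nat \<Rightarrow> real"
  assumes n: "0 < n" and epos: "\<And>k. 0 \<le> e k"
  shows "(\<Sum>i\<in>{0..<n}. (if 0 < i then 1 / (1 + e (i - 1)) else 1) - (if Suc i < n then e i / (1 + e i) else 0))
     = 1 + (\<Sum>k<n - 1. hh (e k))"
proof -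
  obtain m where m: "n = Suc m" using n by (cases n) auto
  have s1: "(\<Sum>i\<in>{0..<n}. (if 0 < i then 1 / (1 + e (i - 1)) else 1)) = 1 + (\<Sum>k<m. 1 / (1 + e k))"
    unfolding m atLeast0LessThan sum.lessThan_Suc_shift by simp
  have s2: "(\<Sum>i\<in>{0..<n}. (if Suc i < n then e i / (1 + e i) else 0)) = (\<Sum>k<m. e k / (1 + e k))"
    unfolding m atLeast0LessThan sum.lessThan_Suc by simp
  have s3: "(\<Sum>k<m. 1 / (1 + e k)) - (\<Sum>k<m. e k / (1 + e k)) = (\<Sum>k<m. hh (e k))"
    unfolding sum_subtractf[symmetric] hh_def by (simp add: diff_divide_distrib)
  show ?thesis unfolding sum_subtractf s1 s2 using s3 m by simp
qed

lemma vec_B_sum: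
  fixes t :: real and x :: "nat \<Rightarrow> real"
  assumes t: "t > 0" and mono: "\<And>i j. i < j \<Longrightarrow> j < n \<Longrightarrow> x i < x j" and n: "0 < n"
  shows "vec n (\<lambda>_. 1) \<bullet> (mat_inv (Zm t x n) *\<^sub>v vec n (\<lambda>_. 1)) = 1 + (\<Sum>k<n - 1. hh (ee t x k))"
proof -
  have inv: "mat_inv (Zm t x n) = Bm t x n"
    by (rule mat_inv_eq[OF _ _ ZB_one[OF t mono]]) (auto simp: Zm_def Bm_def)
  have epos: "\<And>k. 0 \<le> ee t x k" unfolding ee_def by simp
  have cinv: "(ee t x k)^2 \<noteq> 1" if "Suc k < n" for k
  proof -
    have "x k < x (Suc k)" using mono[of k "Suc k"] that by simp
    hence "- t * \<bar>x k - x (Suc k)\<bar> < 0" using t by (simp add: mult_pos_pos)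
    hence "ee t x k < 1" unfolding ee_def by simp
    moreover have "0 < ee t x k" unfolding ee_def by simp
    ultimately have "(ee t x k)^2 < 1" by (simp add: power2_less_1_iff) 
    thus ?thesis by simp
  qed
  have "vec n (\<lambda>_. 1) \<bullet> (Bm t x n *\<^sub>v vec n (\<lambda>_. 1)) = (\<Sum>i\<in>{0..<n}. (\<Sum>j\<in>{0..<n}. Bm t x n $$ (i, j)))"
    unfolding scalar_prod_def by (simp add: Bm_def scalar_prod_def)
  also have "\<dots> = (\<Sum>i\<in>{0..<n}. (if 0 < i then 1 / (1 + ee t x (i - 1)) else 1) - (if Suc i < n then ee t x i / (1 + ee t x i) else 0))"
    by (rule sum.cong[OF refl], rule row_sum_B[OF _ epos cinv]) auto
  also have "\<dots> = 1 + (\<Sum>k<n - 1. hh (ee t x k))" by (rule total_sum[OF n epos])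
  finally show ?thesis using inv by simp
qed



definition nxt :: "real set \<Rightarrow> real \<Rightarrow> real" where "nxt A a = Min {b\<in>A. a < b}"
definition Dm :: "real set \<Rightarrow> real set" where "Dm A = {a\<in>A. \<exists>b\<in>A. a < b}"
definition FF :: "real \<Rightarrow> real set \<Rightarrow> real" where
  "FF t A = (if A = {} then 0 else 1 + (\<Sum>a\<in>Dm A. hh (exp (- t * (nxt A a - a)))))"

lemma Mag_FF:
  assumes t: "t > 0" and fin: "finite A"
  shows "Mag t A = FF t A"
proof (cases "A = {}")
  case True
  thus ?thesis by (simp add: Mag_def FF_def scalar_prod_def)
next
  case ne: False
  define xs where "xs = sorted_list_of_set A"
  define n where "n = card A"
  have len: "length xs = n" unfolding xs_def n_def by simp
  have setxs: "set xs = A" unfolding xs_def using fin by simp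
  have ss: "sorted_wrt (<) xs" unfolding xs_def by simp
  have lt: "xs ! i < xs ! j \<longleftrightarrow> i < j" if "i < n" "j < n" for i j
  proof
    show "i < j \<Longrightarrow> xs ! i < xs ! j" using sorted_wrt_nth_less[OF ss] that len by simp
    assume "xs ! i < xs ! j"
    moreover have "j < i \<Longrightarrow> xs ! j < xs ! i" using sorted_wrt_nth_less[OF ss] that len by simp
    ultimately show "i < j" by (metis less_asym linorder_neqE_nat less_irrefl)
  qed
  have n0: "0 < n" using ne fin unfolding n_def by (simp add: card_gt_0_iff)
  have Z: "zeta_mat t A = Zm t (\<lambda>i. xs ! i) n"
    unfolding zeta_mat_def Zm_def xs_def n_def by (simp add: Let_def)
  have "Mag t A = 1 + (\<Sum>k<n - 1. hh (ee t (\<lambda>i. xs ! i) k))"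
    unfolding Mag_def Let_def n_def[symmetric] Z
    by (rule vec_B_sum[OF t _ n0]) (simp add: lt)
  also have "(\<Sum>k<n - 1. hh (ee t (\<lambda>i. xs ! i) k)) = (\<Sum>a\<in>Dm A. hh (exp (- t * (nxt A a - a))))"
  proof -
    have bij: "bij_betw (\<lambda>k. xs ! k) {..<n - 1} (Dm A)"
    proof (rule bij_betw_imageI)
      show "inj_on (\<lambda>k. xs ! k) {..<n - 1}"
        by (rule inj_onI) (metis lessThan_iff lt less_irrefl linorder_neqE_nat less_diff_conv add_lessD1)
      show "(\<lambda>k. xs ! k) ` {..<n - 1} = Dm A"
      proof
        show "(\<lambda>k. xs ! k) ` {..<n - 1} \<subseteq> Dm A"
        proof
          fix a assume "a \<in> (\<lambda>k. xs ! k) ` {..<n - 1}"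
          then obtain k where k: "k < n - 1" "a = xs ! k" by auto
          have "xs ! k \<in> A" "xs ! Suc k \<in> A" using k len setxs nth_mem by force+
          moreover have "xs ! k < xs ! Suc k" using lt k by simp
          ultimately show "a \<in> Dm A" using k unfolding Dm_def by blast
        qed
        show "Dm A \<subseteq> (\<lambda>k. xs ! k) ` {..<n - 1}"
        proof
          fix a assume "a \<in> Dm A"
          then obtain b where ab: "a \<in> A" "b \<in> A" "a < b" unfolding Dm_def by auto
          obtain k where k: "k < n" "a = xs ! k" using ab(1) setxs len by (metis in_set_conv_nth)
          obtain m where m: "m < n" "b = xs ! m" using ab(2) setxs len by (metis in_set_conv_nth)
          have "k < m" using lt k m ab by simp
          thus "a \<in> (\<lambda>k. xs ! k) ` {..<n - 1}" using k m by auto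
        qed
      qed
    qed
    have eq: "hh (exp (- t * (nxt A (xs ! k) - xs ! k))) = hh (ee t (\<lambda>i. xs ! i) k)" if k: "k \<in> {..<n - 1}" for k
    proof -
    have nx: "nxt A (xs ! k) = xs ! Suc k"
      unfolding nxt_def
    proof (rule Min_eqI)
      show "finite {b \<in> A. xs ! k < b}" using fin by simp
      show "xs ! Suc k \<in> {b \<in> A. xs ! k < b}" using k len setxs lt by auto
      fix y assume "y \<in> {b \<in> A. xs ! k < b}"
      then obtain m where m: "m < n" "y = xs ! m" "xs ! k < xs ! m" using setxs len by (metis (mono_tags, lifting) in_set_conv_nth mem_Collect_eq)
      hence "k < m" using lt k by simp
      show "xs ! Suc k \<le> y"
      proof (cases "Suc k = m")
        case False
        hence "Suc k < m" using \<open>k < m\<close> by simp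
        thus ?thesis using m lt[of "Suc k" m] by simp
      qed (use m in simp)
    qed
    have "xs ! k < xs ! Suc k" using lt k by simp
    thus ?thesis unfolding nx ee_def by simp
    qed
    have "(\<Sum>a\<in>Dm A. hh (exp (- t * (nxt A a - a)))) = (\<Sum>k<n - 1. hh (exp (- t * (nxt A (xs ! k) - xs ! k))))"
      using sum.reindex_bij_betw[OF bij, of "\<lambda>a. hh (exp (- t * (nxt A a - a)))"] by simp
    also have "\<dots> = (\<Sum>k<n - 1. hh (ee t (\<lambda>i. xs ! i) k))" by (rule sum.cong[OF refl eq])
    finally show ?thesis by simp
  qed
  finally show ?thesis unfolding FF_def using ne by simp
qed



definition HH :: "real \<Rightarrow> real \<Rightarrow> real" where "HH u v = hh u + hh v - hh (u * v)"

lemma HH_comm: "HH u v = HH v u" unfolding HH_def by (simp add: mult.commute)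

lemma HH_mono1:
  fixes u u' v :: real
  assumes "0 \<le> u" "u \<le> u'" "u' \<le> 1" "0 \<le> v" "v \<le> 1"
  shows "HH u' v \<le> HH u v"
proof -
  have hh_alt: "hh s = 2 / (1 + s) - 1" if "0 \<le> s" for s
    using that unfolding hh_def by (simp add: field_simps)
  have uv: "0 \<le> u * v" "0 \<le> u' * v" using assms by auto
  have p1: "0 < (1 + u) * (1 + u')" using assms by (simp add: mult_pos_pos)
  have p2: "0 < (1 + u * v) * (1 + u' * v)" using uv by (simp add: mult_pos_pos)
  have d1: "1 / (1 + u) - 1 / (1 + u') = (u' - u) / ((1 + u) * (1 + u'))"
    using assms by (simp add: field_simps)
  have d2: "1 / (1 + u * v) - 1 / (1 + u' * v) = v * (u' - u) / ((1 + u * v) * (1 + u' * v))"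
    using uv by (simp add: field_simps)
  have uuv: "u * u' * v \<le> 1"
  proof -
    have "u * u' \<le> 1 * 1" using assms by (intro mult_mono) auto
    hence "u * u' * v \<le> 1 * 1" using assms by (intro mult_mono) auto
    thus ?thesis by simp
  qed
  have prod: "0 \<le> (1 - v) * (1 - u * u' * v)" using assms uuv by simp
  have ineq: "v * ((1 + u) * (1 + u')) \<le> (1 + u * v) * (1 + u' * v)"
    using prod by (simp add: algebra_simps)
  have k: "v / ((1 + u * v) * (1 + u' * v)) \<le> 1 / ((1 + u) * (1 + u'))"
    using ineq p1 p2 by (simp add: divide_simps mult.commute)
  have "HH u v - HH u' v = 2 * ((1 / (1 + u) - 1 / (1 + u')) - (1 / (1 + u * v) - 1 / (1 + u' * v)))"
    unfolding HH_def using assms uv by (simp add: hh_alt algebra_simps)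
  also have "\<dots> = 2 * (u' - u) * (1 / ((1 + u) * (1 + u')) - v / ((1 + u * v) * (1 + u' * v)))"
    unfolding d1 d2 by (simp add: algebra_simps)
  also have "\<dots> \<ge> 0" using k assms by simp
  finally show ?thesis by simp
qed

lemma HH_mono:
  assumes "0 \<le> u" "u \<le> u'" "u' \<le> 1" "0 \<le> v" "v \<le> v'" "v' \<le> 1"
  shows "HH u' v' \<le> HH u v"
proof -
  have "HH u' v' \<le> HH u v'" using HH_mono1[of u u' v'] assms by simp
  also have "\<dots> = HH v' u" by (rule HH_comm)
  also have "\<dots> \<le> HH v u" using HH_mono1[of v v' u] assms by simp
  also have "\<dots> = HH u v" by (rule HH_comm)
  finally show ?thesis .
qed

lemma HH_nonneg:
  assumes "0 \<le> u" "u \<le> 1" "0 \<le> v" "v \<le> 1"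
  shows "0 \<le> HH u v"
proof -
  have "HH 1 1 \<le> HH u v" using HH_mono[of u 1 v 1] assms by simp
  thus ?thesis by (simp add: HH_def hh_def)
qed



definition slo :: "real \<Rightarrow> real set \<Rightarrow> real \<Rightarrow> real" where
  "slo t A p = (if \<exists>a\<in>A. a < p then exp (- t * (p - Max {a\<in>A. a < p})) else 0)"
definition shi :: "real \<Rightarrow> real set \<Rightarrow> real \<Rightarrow> real" where
  "shi t A p = (if \<exists>a\<in>A. p < a then exp (- t * (Min {a\<in>A. p < a} - p)) else 0)"

lemma nxt_insert:
  assumes "finite A"
  shows "nxt (insert p A) a = (if a < p then (if {b\<in>A. a < b} = {} then p else min p (nxt A a)) else nxt A a)"
proof -
  have fin: "finite {b\<in>A. a < b}" using assms by simp
  show ?thesis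
  proof (cases "a < p")
    case True
    show ?thesis
    proof (cases "{b\<in>A. a < b} = {}")
      case True
      hence "{b\<in>insert p A. a < b} = {p}" using \<open>a < p\<close> by auto
      thus ?thesis unfolding nxt_def using True \<open>a < p\<close> by simp
    next
      case False
      have "{b\<in>insert p A. a < b} = insert p {b\<in>A. a < b}" using \<open>a < p\<close> by auto
      hence "nxt (insert p A) a = min p (nxt A a)" unfolding nxt_def using Min_insert[OF fin False] by simp
      thus ?thesis by (subst if_P[OF \<open>a < p\<close>], subst if_not_P[OF False])
    qed
  next
    case False
    hence "{b\<in>insert p A. a < b} = {b\<in>A. a < b}" by auto
    thus ?thesis unfolding nxt_def using False by simp
  qed
qed

lemma nxt_props:
  assumes "finite A" "a \<in> Dm A"
  shows "nxt A a \<in> A" "a < nxt A a" "\<And>b. b \<in> A \<Longrightarrow> a < b \<Longrightarrow> nxt A a \<le> b"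
proof -
  have ne: "{b\<in>A. a < b} \<noteq> {}" using assms unfolding Dm_def by auto
  have fin: "finite {b\<in>A. a < b}" using assms by simp
  have "nxt A a \<in> {b\<in>A. a < b}" unfolding nxt_def using Min_in[OF fin ne] .
  thus "nxt A a \<in> A" "a < nxt A a" by auto
  show "\<And>b. b \<in> A \<Longrightarrow> a < b \<Longrightarrow> nxt A a \<le> b" unfolding nxt_def using fin by auto
qed

lemma FF_insert:
  assumes fin: "finite A" and p: "p \<notin> A"
  shows "FF t (insert p A) = FF t A + HH (slo t A p) (shi t A p)"
proof -
  define G where "G B a = hh (exp (- t * (nxt B a - a)))" for B a
  define A' where "A' = insert p A"
  have finA': "finite A'" using fin unfolding A'_def by simp
  have FFe: "FF t B = (if B = {} then 0 else 1 + (\<Sum>a\<in>Dm B. G B a))" for B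
    unfolding FF_def G_def by simp
  have finD: "finite (Dm B)" if "finite B" for B using that unfolding Dm_def by simp
  define L where "L = {a\<in>A. a < p}"
  define U where "U = {a\<in>A. p < a}"
  have finL: "finite L" "finite U" using fin unfolding L_def U_def by auto
  show ?thesis
  proof (cases "L = {}")
    case L0: True
    show ?thesis
    proof (cases "U = {}")
      case U0: True
      have "A = {}" using L0 U0 p unfolding L_def U_def by (metis (mono_tags, lifting) empty_Collect_eq ex_in_conv linorder_neqE)
      moreover have "Dm {p} = {}" unfolding Dm_def by auto
      ultimately show ?thesis unfolding FF_def HH_def slo_def shi_def hh_def by simp
    next
      case U1: False
      have allgt: "\<And>a. a \<in> A \<Longrightarrow> p < a" using L0 p unfolding L_def by (metis (mono_tags, lifting) empty_Collect_eq linorder_neqE)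
      have Ane: "A \<noteq> {}" using U1 unfolding U_def by auto
      have DA': "Dm A' = insert p (Dm A)"
        using U1 unfolding Dm_def A'_def U_def by (auto dest: allgt)
      have pD: "p \<notin> Dm A" using p unfolding Dm_def by auto
      have Gp: "G A' p = hh (shi t A p)"
      proof -
        have "nxt A' p = nxt A p" unfolding A'_def using nxt_insert[OF fin] by simp
        moreover have "nxt A p = Min U" unfolding nxt_def U_def by simp
        ultimately show ?thesis unfolding G_def shi_def U_def using U1 U_def by auto
      qed
      have Geq: "G A' a = G A a" if "a \<in> Dm A" for a
      proof -
        have "\<not> a < p" using allgt that unfolding Dm_def by force
        thus ?thesis unfolding G_def A'_def using nxt_insert[OF fin] by simp
      qed
      have "FF t A' = 1 + (G A' p + (\<Sum>a\<in>Dm A. G A' a))"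
        using FFe[of A'] DA' pD finD[OF fin] unfolding A'_def by simp
      also have "(\<Sum>a\<in>Dm A. G A' a) = (\<Sum>a\<in>Dm A. G A a)" using Geq by simp
      finally have "FF t A' = FF t A + hh (shi t A p)" using FFe[of A] Ane Gp by simp
      moreover have "slo t A p = 0" using L0 unfolding slo_def L_def by auto
      ultimately show ?thesis unfolding A'_def HH_def by (simp add: hh_def)
    qed
  next
    case L1: False
    define lo where "lo = Max L"
    have loL: "lo \<in> L" unfolding lo_def using Max_in[OF finL(1) L1] .
    hence loA: "lo \<in> A" "lo < p" unfolding L_def by auto
    have loMax: "\<And>a. a \<in> A \<Longrightarrow> a < p \<Longrightarrow> a \<le> lo" using Max_ge[OF finL(1)] unfolding lo_def L_def by auto
    have Ane: "A \<noteq> {}" using loA by auto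
    have slo_eq: "slo t A p = exp (- t * (p - lo))" unfolding slo_def lo_def L_def using loA by auto
    have Glo: "G A' lo = hh (slo t A p)" if "U = {} \<or> nxt A lo > p"
    proof -
      have "nxt A' lo = p"
      proof (cases "{b\<in>A. lo < b} = {}")
        case True thus ?thesis unfolding A'_def using nxt_insert[OF fin] loA by simp
      next
        case False
        hence "lo \<in> Dm A" using loA unfolding Dm_def by auto
        hence "nxt A lo > p" using that nxt_props[OF fin] loA unfolding U_def by (metis (mono_tags, lifting) empty_iff mem_Collect_eq neq_iff loMax not_le p)
        thus ?thesis unfolding A'_def using nxt_insert[OF fin] loA False by simp
      qed
      thus ?thesis unfolding G_def slo_eq by simp
    qed
    have Geq: "G A' a = G A a" if "a \<in> Dm A" "a \<noteq> lo" for a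
    proof (cases "a < p")
      case True
      have "a < lo" using loMax[of a] True that unfolding Dm_def by force
      hence "nxt A a \<le> lo" using nxt_props(3)[OF fin that(1)] loA by simp
      hence "min p (nxt A a) = nxt A a" using loA by simp
      moreover have "{b\<in>A. a < b} \<noteq> {}" using that unfolding Dm_def by auto
      ultimately have "nxt A' a = nxt A a" unfolding A'_def using nxt_insert[OF fin, of p a] True
        by (simp only: if_P if_not_P if_False)
      thus ?thesis unfolding G_def by simp
    next
      case False
      thus ?thesis unfolding G_def A'_def using nxt_insert[OF fin] by simp
    qed
    show ?thesis
    proof (cases "U = {}")
      case U0: True
      have allLt: "\<And>a. a \<in> A \<Longrightarrow> a < p" using U0 p unfolding U_def by (metis (mono_tags, lifting) empty_Collect_eq linorder_neqE)
      have loD: "lo \<notin> Dm A" using loMax allLt unfolding Dm_def by force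
      have DA': "Dm A' = insert lo (Dm A)"
      proof -
        have "Dm A' = A" unfolding Dm_def A'_def using p by (auto dest: allLt)
        moreover have "A = insert lo (Dm A)"
        proof
          show "A \<subseteq> insert lo (Dm A)"
          proof
            fix a assume "a \<in> A"
            thus "a \<in> insert lo (Dm A)" using loMax[of a] allLt[of a] loA unfolding Dm_def
              by (cases "a = lo") (auto simp: order.order_iff_strict)
          qed
        qed (use loA in \<open>auto simp: Dm_def\<close>)
        ultimately show ?thesis by simp
      qed
      have "FF t A' = 1 + (G A' lo + (\<Sum>a\<in>Dm A. G A' a))"
        using FFe[of A'] DA' loD finD[OF fin] unfolding A'_def by simp
      also have "(\<Sum>a\<in>Dm A. G A' a) = (\<Sum>a\<in>Dm A. G A a)" using Geq loD by (metis sum.cong)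
      finally have "FF t A' = FF t A + hh (slo t A p)" using FFe[of A] Ane Glo U0 by simp
      moreover have "shi t A p = 0" using U0 unfolding shi_def U_def by auto
      ultimately show ?thesis unfolding A'_def HH_def by (simp add: hh_def)
    next
      case U1: False
      define hi where "hi = Min U"
      have hiU: "hi \<in> U" unfolding hi_def using Min_in[OF finL(2) U1] .
      hence hiA: "hi \<in> A" "p < hi" unfolding U_def by auto
      have "lo < hi" using loA hiA by simp
      hence loD: "lo \<in> Dm A" using loA(1) hiA(1) unfolding Dm_def by blast
      have nlo: "nxt A lo = hi"
      proof -
        have iff: "(b \<in> A \<and> lo < b) \<longleftrightarrow> (b \<in> A \<and> p < b)" for b
        proof
          assume b: "b \<in> A \<and> lo < b"
          hence "\<not> b < p" using loMax[of b] by auto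
          moreover have "b \<noteq> p" using b p by auto
          ultimately show "b \<in> A \<and> p < b" using b by auto
        next
          assume "b \<in> A \<and> p < b"
          thus "b \<in> A \<and> lo < b" using loA by auto
        qed
        have "{b\<in>A. lo < b} = U" unfolding U_def using iff by blast
        thus ?thesis unfolding nxt_def hi_def by simp
      qed
      have pD: "p \<notin> Dm A" using p unfolding Dm_def by auto
      have DA': "Dm A' = insert p (Dm A)"
        using hiA loD unfolding Dm_def A'_def by (auto; meson hiA less_trans)
      have shi_eq: "shi t A p = exp (- t * (hi - p))" unfolding shi_def hi_def U_def using hiA by auto
      have Gp: "G A' p = hh (shi t A p)"
      proof -
        have "nxt A' p = nxt A p" unfolding A'_def using nxt_insert[OF fin] by simp
        moreover have "nxt A p = hi" unfolding nxt_def U_def hi_def by simp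
        ultimately show ?thesis unfolding G_def shi_eq by simp
      qed
      have GAlo: "G A lo = hh (slo t A p * shi t A p)"
        unfolding G_def nlo slo_eq shi_eq by (simp add: exp_add[symmetric] algebra_simps)
      have Dsplit: "Dm A = insert lo (Dm A - {lo})" using loD by auto
      have finD': "finite (Dm A - {lo})" using finD[OF fin] by simp
      have "FF t A' = 1 + (G A' p + (G A' lo + (\<Sum>a\<in>Dm A - {lo}. G A' a)))"
        using FFe[of A'] DA' pD finD[OF fin] sum.insert[OF finD', of lo "G A'"] Dsplit unfolding A'_def by simp
      also have "(\<Sum>a\<in>Dm A - {lo}. G A' a) = (\<Sum>a\<in>Dm A - {lo}. G A a)" using Geq by simp
      finally have e1: "FF t A' = 1 + (G A' p + (G A' lo + (\<Sum>a\<in>Dm A - {lo}. G A a)))" .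
      have e2: "FF t A = 1 + (G A lo + (\<Sum>a\<in>Dm A - {lo}. G A a))"
        using FFe[of A] Ane sum.insert[OF finD', of lo "G A"] Dsplit by simp
      show ?thesis using e1 e2 Gp GAlo Glo nlo hiA unfolding A'_def HH_def by simp
    qed
  qed
qed



lemma slo_bounds:
  assumes "t > 0" "finite A"
  shows "0 \<le> slo t A p" "slo t A p \<le> 1"
proof -
  show "0 \<le> slo t A p" unfolding slo_def by simp
  show "slo t A p \<le> 1"
  proof (cases "\<exists>a\<in>A. a < p")
    case True
    have "Max {a\<in>A. a < p} \<in> {a\<in>A. a < p}" using True assms by (intro Max_in) auto
    hence "0 \<le> t * (p - Max {a\<in>A. a < p})" using assms by simp
    thus ?thesis unfolding slo_def using True by simp
  qed (simp add: slo_def)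
qed

lemma shi_bounds:
  assumes "t > 0" "finite A"
  shows "0 \<le> shi t A p" "shi t A p \<le> 1"
proof -
  show "0 \<le> shi t A p" unfolding shi_def by simp
  show "shi t A p \<le> 1"
  proof (cases "\<exists>a\<in>A. p < a")
    case True
    have "Min {a\<in>A. p < a} \<in> {a\<in>A. p < a}" using True assms by (intro Min_in) auto
    hence "0 \<le> t * (Min {a\<in>A. p < a} - p)" using assms by simp
    thus ?thesis unfolding shi_def using True by simp
  qed (simp add: shi_def)
qed

lemma slo_mono:
  assumes "t > 0" "finite B" "A \<subseteq> B"
  shows "slo t A p \<le> slo t B p"
proof (cases "\<exists>a\<in>A. a < p")
  case True
  hence TB: "\<exists>a\<in>B. a < p" using assms by auto
  have "Max {a\<in>A. a < p} \<le> Max {a\<in>B. a < p}"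
    using True assms by (intro Max_mono) auto
  hence "- t * (p - Max {a\<in>A. a < p}) \<le> - t * (p - Max {a\<in>B. a < p})"
    using assms by (intro mult_left_mono_neg) auto
  thus ?thesis unfolding slo_def using True TB by simp
next
  case False
  thus ?thesis unfolding slo_def by simp
qed

lemma shi_mono:
  assumes "t > 0" "finite B" "A \<subseteq> B"
  shows "shi t A p \<le> shi t B p"
proof (cases "\<exists>a\<in>A. p < a")
  case True
  hence TB: "\<exists>a\<in>B. p < a" using assms by auto
  have "Min {a\<in>B. p < a} \<le> Min {a\<in>A. p < a}"
    using True assms by (intro Min_antimono) auto
  hence "- t * (Min {a\<in>A. p < a} - p) \<le> - t * (Min {a\<in>B. p < a} - p)"
    using assms by (intro mult_left_mono_neg) auto
  thus ?thesis unfolding shi_def using True TB by simp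
next
  case False
  thus ?thesis unfolding shi_def by simp
qed

lemma inc_nonneg:
  assumes "t > 0" "finite A"
  shows "FF t A \<le> FF t (insert p A)"
proof (cases "p \<in> A")
  case True thus ?thesis by (simp add: insert_absorb)
next
  case False
  thus ?thesis using FF_insert[OF assms(2) False] HH_nonneg slo_bounds[OF assms] shi_bounds[OF assms]
    by simp
qed

lemma inc_dim:
  assumes t: "t > 0" and fin: "finite B" and AB: "A \<subseteq> B" and p: "p \<notin> B"
  shows "FF t (insert p B) - FF t B \<le> FF t (insert p A) - FF t A"
proof -
  have finA: "finite A" using fin AB finite_subset by auto
  have pA: "p \<notin> A" using p AB by auto
  have "HH (slo t B p) (shi t B p) \<le> HH (slo t A p) (shi t A p)"
    using slo_bounds[OF t fin] shi_bounds[OF t fin] slo_bounds[OF t finA] shi_bounds[OF t finA]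
      slo_mono[OF t fin AB] shi_mono[OF t fin AB]
    by (intro HH_mono) auto
  thus ?thesis using FF_insert[OF fin p] FF_insert[OF finA pA] by simp
qed

lemma dim_sets:
  assumes t: "t > 0" and C: "finite C"
  shows "finite B \<Longrightarrow> A \<subseteq> B \<Longrightarrow> FF t (B \<union> C) - FF t B \<le> FF t (A \<union> C) - FF t A"
  using C
proof (induction C arbitrary: A B rule: finite_induct)
  case empty thus ?case by simp
next
  case (insert p C)
  have IH: "FF t (B \<union> C) - FF t B \<le> FF t (A \<union> C) - FF t A" using insert by simp
  have finB: "finite (B \<union> C)" using insert by simp
  have finA: "finite (A \<union> C)" using insert finite_subset by blast
  have sub: "A \<union> C \<subseteq> B \<union> C" using insert by auto
  have step: "FF t (insert p (B \<union> C)) - FF t (B \<union> C) \<le> FF t (insert p (A \<union> C)) - FF t (A \<union> C)"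
  proof (cases "p \<in> B \<union> C")
    case True
    hence "FF t (insert p (B \<union> C)) = FF t (B \<union> C)" by (simp add: insert_absorb)
    thus ?thesis using inc_nonneg[OF t finA, of p] by simp
  next
    case False
    show ?thesis by (rule inc_dim[OF t finB sub False])
  qed
  have "B \<union> insert p C = insert p (B \<union> C)" "A \<union> insert p C = insert p (A \<union> C)" by auto
  thus ?case using IH step by simp
qed

lemma mono_sets:
  assumes t: "t > 0" and C: "finite C"
  shows "finite A \<Longrightarrow> FF t A \<le> FF t (A \<union> C)"
  using C
proof (induction C rule: finite_induct)
  case empty thus ?case by simp
next
  case (insert p C)
  have "FF t (A \<union> C) \<le> FF t (insert p (A \<union> C))" using inc_nonneg[OF t] insert by simp
  thus ?case using insert by simp
qed


theorem propositionB7: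
  fixes t :: real and X Y Z :: "real set"
  assumes "t > 0" and "finite X" and "finite Y" and "finite Z"
  shows "d_Mag t X Y + d_Mag t Y Z \<ge> d_Mag t X Z"
proof -
  have t: "t > 0" using assms by simp
  have M: "Mag t S = FF t S" if "finite S" for S using Mag_FF[OF t that] .
  have fXY: "finite (X \<union> Y)" and fYZ: "finite (Y \<union> Z)" and fXZ: "finite (X \<union> Z)"
    using assms by auto
  have d1: "FF t ((X \<union> Y) \<union> Z) - FF t (X \<union> Y) \<le> FF t (Y \<union> Z) - FF t Y"
    using dim_sets[OF t assms(4) fXY, of Y] by auto
  have d2: "FF t (X \<union> Z) \<le> FF t ((X \<union> Z) \<union> Y)"
    using mono_sets[OF t assms(3) fXZ] .
  have eq: "(X \<union> Z) \<union> Y = (X \<union> Y) \<union> Z" by auto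
  have "d_Mag t X Y + d_Mag t Y Z - d_Mag t X Z
      = 2 * (FF t (X \<union> Y) + FF t (Y \<union> Z) - FF t Y - FF t (X \<union> Z))"
    unfolding d_Mag_def using M assms fXY fYZ fXZ by (simp add: Un_commute)
  also have "\<dots> \<ge> 0" using d1 d2 eq by simp
  finally show ?thesis by simp
qed

end
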